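(* Let $N:\mathbb{R}\to[0,1]$ be a monotone nondecreasing cumulative distribution function whose density has bounded support $[A,B]$. Then for every $\epsilon>0$ there exist support bounds $A^*<B^*$ and parameters $\theta$ of a PNN such that $$\sup_{x\in[A,B]}\bigl|N_\theta(x)-N(x)\bigr|<\epsilon,$$ where $N_\theta$ is the normalized PNN cdf with support bounds $[A^*,B^*]$.
   Context: Let $\sigma(t)=1/(1+e^{-t})$. A PNN (probabilistically normalized network) of depth $L\ge 2$ on inputs $z\in\mathbb{R}$ is the function $F_\theta$ defined by $a_0=z$, $a_\ell=\sigma(W_\ell^{T}a_{\ell-1}+c_\ell)$ for $\ell=1,\dots,L-1$ (entrywise sigmoid), and $F_\theta(z)=\beta^{T}a_{L-1}$, where every weight matrix $W_\ell$ has strictly positive entries, the biases $c_\ell$ are arbitrary real vectors, and $\beta$ is a probability vector with strictly positive entries (widths arbitrary); $\theta$ denotes all these parameters. Given support bounds $A^*<B^*$, the normalized PNN cdf is $N_\theta(x)=\frac{F_\theta(x)-F_\theta(A^* )}{F_\theta(B^* )-F_\theta(A^* )}$. *)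

theory Defs
  imports "HOL-Analysis.Analysis"
begin

definition sigmoid :: "real \<Rightarrow> real" where
  "sigmoid t = 1 / (1 + exp (- t))"

text \<open>Layer widths d :: nat => nat (d 0 = 1 is the input width), weights W l i j
  (layer l, from unit i of layer l-1 to unit j of layer l), biases c l j.
  pnn_act d W c l z is the activation vector a_l at input z.\<close>
fun pnn_act :: "(nat \<Rightarrow> nat) \<Rightarrow> (nat \<Rightarrow> nat \<Rightarrow> nat \<Rightarrow> real) \<Rightarrow> (nat \<Rightarrow> nat \<Rightarrow> real)
    \<Rightarrow> nat \<Rightarrow> real \<Rightarrow> nat \<Rightarrow> real" where
  "pnn_act d W c 0 z = (\<lambda>i. z)"
| "pnn_act d W c (Suc l) z =
     (\<lambda>j. sigmoid ((\<Sum>i<d l. W (Suc l) i j * pnn_act d W c l z i) + c (Suc l) j))"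

definition pnn_out :: "nat \<Rightarrow> (nat \<Rightarrow> nat) \<Rightarrow> (nat \<Rightarrow> nat \<Rightarrow> nat \<Rightarrow> real)
    \<Rightarrow> (nat \<Rightarrow> nat \<Rightarrow> real) \<Rightarrow> (nat \<Rightarrow> real) \<Rightarrow> real \<Rightarrow> real" where
  "pnn_out L d W c \<beta> z = (\<Sum>j<d (L - 1). \<beta> j * pnn_act d W c (L - 1) z j)"

definition valid_pnn :: "nat \<Rightarrow> (nat \<Rightarrow> nat) \<Rightarrow> (nat \<Rightarrow> nat \<Rightarrow> nat \<Rightarrow> real)
    \<Rightarrow> (nat \<Rightarrow> real) \<Rightarrow> bool" where
  "valid_pnn L d W \<beta> \<longleftrightarrow> L \<ge> 2 \<and> d 0 = 1 \<and> (\<forall>l\<in>{1..L-1}. d l \<ge> 1)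
     \<and> (\<forall>l\<in>{1..L-1}. \<forall>i<d (l - 1). \<forall>j<d l. W l i j > 0)
     \<and> (\<forall>j<d (L - 1). \<beta> j > 0) \<and> (\<Sum>j<d (L - 1). \<beta> j) = 1"

definition pnn_norm :: "nat \<Rightarrow> (nat \<Rightarrow> nat) \<Rightarrow> (nat \<Rightarrow> nat \<Rightarrow> nat \<Rightarrow> real)
    \<Rightarrow> (nat \<Rightarrow> nat \<Rightarrow> real) \<Rightarrow> (nat \<Rightarrow> real) \<Rightarrow> real \<Rightarrow> real \<Rightarrow> real \<Rightarrow> real" where
  "pnn_norm L d W c \<beta> As Bs x =
     (pnn_out L d W c \<beta> x - pnn_out L d W c \<beta> As) / (pnn_out L d W c \<beta> Bs - pnn_out L d W c \<beta> As)"

end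

theory Submission imports Defs begin

lemma sig_alt: "sigmoid t = exp t / (1 + exp t)"
  unfolding sigmoid_def by (simp add: exp_minus field_simps)

lemma sig_top: "(sigmoid \<longlongrightarrow> 1) at_top"
proof -
  have "((\<lambda>t::real. exp (-t)) \<longlongrightarrow> (0::real)) at_top"
    using filterlim_compose[OF exp_at_bot filterlim_uminus_at_bot_at_top] by (simp add: o_def)
  hence "((\<lambda>t::real. 1 / (1 + exp (-t))) \<longlongrightarrow> (1::real) / (1 + 0)) at_top"
    by (intro tendsto_divide tendsto_add tendsto_const) simp_all
  thus ?thesis unfolding sigmoid_def by simp
qed

lemma sig_bot: "(sigmoid \<longlongrightarrow> 0) at_bot"
proof -
  have "((\<lambda>t::real. exp t / (1 + exp t)) \<longlongrightarrow> (0::real) / (1 + 0)) at_bot"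
    by (intro tendsto_divide tendsto_add tendsto_const exp_at_bot) simp_all
  thus ?thesis unfolding sig_alt by simp
qed

lemma sig_lim1: "((\<lambda>w. sigmoid (w * (x - s))) \<longlongrightarrow> 1) at_top" if "x - s > 0"
proof -
  have "filterlim (\<lambda>w. (x - s) * w) at_top at_top"
    by (rule filterlim_tendsto_pos_mult_at_top[OF tendsto_const that filterlim_ident])
  hence "filterlim (\<lambda>w. w * (x - s)) at_top at_top" by (simp add: mult.commute)
  from filterlim_compose[OF sig_top this] show ?thesis by (simp add: o_def)
qed

lemma sig_lim0: "((\<lambda>w. sigmoid (w * (x - s))) \<longlongrightarrow> 0) at_top" if "x - s < 0"
proof -
  have "filterlim (\<lambda>w. (x - s) * w) at_bot at_top"
    by (rule filterlim_tendsto_neg_mult_at_bot[OF tendsto_const that filterlim_ident])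
  hence "filterlim (\<lambda>w. w * (x - s)) at_bot at_top" by (simp add: mult.commute)
  from filterlim_compose[OF sig_bot this] show ?thesis by (simp add: o_def)
qed

lemma sig_strict: "x < y \<Longrightarrow> sigmoid x < sigmoid y"
  unfolding sigmoid_def by (simp add: frac_less2 add_pos_pos)

lemma sig_mono: "x \<le> y \<Longrightarrow> sigmoid x \<le> sigmoid y"
  using sig_strict by (cases "x = y") (auto simp: order_le_less)

lemma pnn2: "pnn_out 2 (\<lambda>l. if l = 0 then 1 else n) (\<lambda>l i j. w) (\<lambda>l j. - w * s j) \<beta> z
   = (\<Sum>j<n. \<beta> j * sigmoid (w * (z - s j)))"
  by (simp add: pnn_out_def numeral_2_eq_2 algebra_simps)

lemma lemmaN:
  fixes N f :: "real \<Rightarrow> real" and A B :: real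
  assumes "A < B"
    and "\<And>x. x \<notin> {A..B} \<Longrightarrow> f x = 0"
    and "\<And>x. (f has_integral N x) {..x}"
    and "(N \<longlongrightarrow> 1) at_top"
  shows "continuous_on {A..B} N" "N A = 0" "N B = 1"
proof -
  have hasA: "(f has_integral N x) {A..x}" if "A \<le> x" for x
  proof -
    have eq: "(\<lambda>y. if y \<in> {..x} then f y else 0) = (\<lambda>y. if y \<in> {A..x} then f y else 0)"
      using assms(2) that by (auto simp: fun_eq_iff)
    from assms(3)[of x] have "((\<lambda>y. if y \<in> {..x} then f y else 0) has_integral N x) UNIV"
      by (simp only: has_integral_restrict_UNIV)
    hence "((\<lambda>y. if y \<in> {A..x} then f y else 0) has_integral N x) UNIV" by (simp only: eq)
    thus ?thesis by (simp only: has_integral_restrict_UNIV)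
  qed
  have eqA: "N x = integral {A..x} f" if "A \<le> x" for x
    using hasA[OF that] by (rule integral_unique[symmetric])
  have intB: "(f has_integral N x) UNIV" if "B \<le> x" for x
  proof -
    have eq: "(\<lambda>y. if y \<in> {..x} then f y else 0) = f"
      using assms(2) that by (auto simp: fun_eq_iff)
    from assms(3)[of x] have "((\<lambda>y. if y \<in> {..x} then f y else 0) has_integral N x) UNIV"
      by (simp only: has_integral_restrict_UNIV)
    thus ?thesis by (simp only: eq)
  qed
  have "f integrable_on {A..B}" using hasA[of B] assms(1) by (simp add: has_integral_integrable)
  hence "continuous_on {A..B} (\<lambda>x. integral {A..x} f)" by (rule indefinite_integral_continuous_1)
  thus "continuous_on {A..B} N" by (rule continuous_on_eq) (auto simp: eqA)
  show "N A = 0" using eqA[of A] by simp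
  have "eventually (\<lambda>x. N x = N B) at_top"
    using eventually_ge_at_top[of B]
  proof eventually_elim
    case (elim x) thus ?case using has_integral_unique[OF intB[of x] intB[of B]] by simp
  qed
  hence "(N \<longlongrightarrow> N B) at_top" by (rule tendsto_eventually)
  from tendsto_unique[OF _ this assms(4)] show "N B = 1" by simp
qed

lemma grid_find:
  fixes A B x :: real and n :: nat
  assumes "A < B" "n \<ge> 1" "A \<le> x" "x \<le> B"
  shows "\<exists>i<n. A + real i * ((B - A) / n) \<le> x \<and> x \<le> A + real (Suc i) * ((B - A) / n)"
proof (cases "x < B")
  case True
  define h where "h = (B - A) / n"
  have h: "h > 0" using assms unfolding h_def by auto
  define k where "k = \<lfloor>(x - A) / h\<rfloor>"
  have k0: "k \<ge> 0" unfolding k_def using h assms by auto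
  have k1: "k \<le> (x - A) / h" "(x - A) / h < k + 1" unfolding k_def by linarith+
  have "(x - A) / h < n" using True h assms unfolding h_def by (simp add: field_simps)
  hence kn: "nat k < n" using k1 k0 by linarith
  have "real (nat k) * h \<le> x - A" using k1 k0 h by (simp add: field_simps)
  moreover have "x - A \<le> real (Suc (nat k)) * h" using k1 k0 h by (simp add: field_simps)
  ultimately show ?thesis using kn unfolding h_def by (intro exI[of _ "nat k"]) auto
next
  case False
  hence "x = B" using assms by auto
  moreover have "A + real (n - 1) * ((B - A) / n) \<le> B"
  proof -
    have "real (n - 1) * ((B - A) / n) \<le> real n * ((B - A) / n)"
      using assms by (intro mult_right_mono) auto
    also have "\<dots> = B - A" using assms by simp
    finally show ?thesis by simp
  qed
  moreover have "A + real (Suc (n - 1)) * ((B - A) / n) = B" using assms by simp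
  ultimately show ?thesis using assms by (intro exI[of _ "n - 1"]) auto
qed

lemma F_lim:
  fixes \<beta> s :: "nat \<Rightarrow> real" and z :: real
  assumes "\<And>j. j < n \<Longrightarrow> s j \<noteq> z"
  shows "((\<lambda>w. \<Sum>j<n. \<beta> j * sigmoid (w * (z - s j))) \<longlongrightarrow> (\<Sum>j<n. \<beta> j * (if s j < z then 1 else 0))) at_top"
proof (intro tendsto_sum tendsto_mult tendsto_const)
  fix j assume "j \<in> {..<n}"
  hence "s j \<noteq> z" using assms by auto
  thus "((\<lambda>w. sigmoid (w * (z - s j))) \<longlongrightarrow> (if s j < z then 1 else 0)) at_top"
    by (cases "s j < z") (auto intro: sig_lim1 sig_lim0)
qed

theorem lemma5:
  fixes N f :: "real \<Rightarrow> real" and A B :: real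
  assumes "A < B"
    and "\<And>x. 0 \<le> N x \<and> N x \<le> 1"
    and "mono N"
    and "(N \<longlongrightarrow> 0) at_bot" and "(N \<longlongrightarrow> 1) at_top"
    and "\<And>x. f x \<ge> 0"
    and "\<And>x. x \<notin> {A..B} \<Longrightarrow> f x = 0"
    and "\<And>x. (f has_integral N x) {..x}"
  shows "\<forall>\<epsilon>>0. \<exists>As Bs L d W c \<beta>. As < Bs \<and> valid_pnn L d W \<beta> \<and>
           (SUP x\<in>{A..B}. \<bar>pnn_norm L d W c \<beta> As Bs x - N x\<bar>) < \<epsilon>"
proof (intro allI impI)
  fix \<epsilon> :: real assume e: "\<epsilon> > 0"
  have contN: "continuous_on {A..B} N" and NA: "N A = 0" and NB: "N B = 1"
    using lemmaN[OF assms(1) assms(7) assms(8) assms(5)] by auto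
  have "uniformly_continuous_on {A..B} N"
    using contN compact_uniformly_continuous by blast
  moreover have e4: "\<epsilon>/4 > 0" using e by simp
  ultimately obtain dd where dd: "dd > 0"
    and ucN0: "\<forall>x\<in>{A..B}. \<forall>y\<in>{A..B}. dist y x < dd \<longrightarrow> dist (N y) (N x) < \<epsilon>/4"
    unfolding uniformly_continuous_on_def by blast
  have ucN: "\<And>x y. x \<in> {A..B} \<Longrightarrow> y \<in> {A..B} \<Longrightarrow> dist y x < dd \<Longrightarrow> dist (N y) (N x) < \<epsilon>/4"
    using ucN0 by blast
  obtain n :: nat where n: "n > (B - A) / dd" using reals_Archimedean2 by blast
  have "(B - A) / dd > 0" using assms(1) dd by simp
  hence "real n > 0" using n by linarith
  hence n1: "n \<ge> 1" by simp
  define h where "h = (B - A) / n"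
  have h0: "h > 0" using n1 assms(1) unfolding h_def by auto
  have hdd: "h < dd" using n dd n1 unfolding h_def by (simp add: field_simps)
  define t where "t i = A + real i * h" for i
  define s where "s j = A + (real j + 1/2) * h" for j
  define \<delta> where "\<delta> = min (\<epsilon>/8) (1/2)"
  have d0: "\<delta> > 0" "\<delta> \<le> \<epsilon>/8" "\<delta> < 1" using e unfolding \<delta>_def by auto
  define \<beta> where "\<beta> j = (1 - \<delta>) * (N (t (Suc j)) - N (t j)) + \<delta> / n" for j
  have tn: "t n = B" using n1 unfolding t_def h_def by simp
  have t0: "t 0 = A" unfolding t_def by simp
  have tin: "t i \<in> {A..B}" if "i \<le> n" for i
  proof -
    have "real i * h \<le> real n * h" using that h0 by (intro mult_right_mono) auto
    thus ?thesis using tn h0 unfolding t_def by auto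
  qed
  have \<beta>pos: "\<beta> j > 0" for j
  proof -
    have "N (t j) \<le> N (t (Suc j))" using assms(3) h0 unfolding t_def mono_def by auto
    hence "(1 - \<delta>) * (N (t (Suc j)) - N (t j)) \<ge> 0" using d0 by auto
    moreover have "\<delta> / n > 0" using d0 n1 by auto
    ultimately show ?thesis unfolding \<beta>_def by linarith
  qed
  define P where "P i = (\<Sum>j<i. \<beta> j)" for i
  have Pform: "P i = (1 - \<delta>) * N (t i) + \<delta> * i / n" for i
  proof (induction i)
    case 0 thus ?case using NA t0 unfolding P_def by simp
  next
    case (Suc i)
    have "P (Suc i) = P i + \<beta> i" unfolding P_def by simp
    also have "\<dots> = (1 - \<delta>) * N (t (Suc i)) + \<delta> * (Suc i) / n"
    proof -
      have e: "\<delta> * real (Suc i) / n = \<delta> * i / n + \<delta> / n" by (simp add: distrib_left add_divide_distrib)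
      show ?thesis unfolding e \<beta>_def Suc by (simp add: algebra_simps)
    qed
    finally show ?case .
  qed
  have Pn: "P n = 1" using Pform[of n] tn NB n1 by simp
  have PN: "\<bar>P i - N (t i)\<bar> \<le> \<delta>" if "i \<le> n" for i
  proof -
    have "P i - N (t i) = \<delta> * (i / n - N (t i))" using Pform[of i] by (simp add: field_simps)
    moreover have "\<bar>i / n - N (t i)\<bar> \<le> 1"
    proof -
      have "real i / n \<le> 1" using that n1 by (simp add: divide_le_eq)
      moreover have "real i / n \<ge> 0" by simp
      ultimately show ?thesis using assms(2)[of "t i"] unfolding abs_le_iff by linarith
    qed
    ultimately show ?thesis using d0 mult_left_le[of "\<bar>i / n - N (t i)\<bar>" \<delta>]
      by (simp add: abs_mult)
  qed
  define F where "F w z = (\<Sum>j<n. \<beta> j * sigmoid (w * (z - s j)))" for w z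
  define As where "As = A - 1"
  define Bs where "Bs = B + 1"
  have sA: "A < s j" for j using h0 unfolding s_def by (simp add: add_pos_nonneg)
  have sB: "s j < B" if "j < n" for j
  proof -
    have "real j + 1/2 < real n" using that by linarith
    hence "(real j + 1/2) * h < real n * h" using h0 by (intro mult_strict_right_mono) auto
    thus ?thesis using tn unfolding s_def t_def by simp
  qed
  have sAs: "s j \<noteq> As" for j using sA[of j] unfolding As_def by linarith
  have sAs2: "\<not> s j < As" for j using sA[of j] unfolding As_def by linarith
  have limAs: "((\<lambda>w. F w As) \<longlongrightarrow> 0) at_top"
  proof -
    have "((\<lambda>w. F w As) \<longlongrightarrow> (\<Sum>j<n. \<beta> j * (if s j < As then 1 else 0))) at_top"
      unfolding F_def using sAs by (intro F_lim) blast
    moreover have "(\<Sum>j<n. \<beta> j * (if s j < As then 1 else 0)) = 0"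
      using sAs2 by (intro sum.neutral ballI) simp
    ultimately show ?thesis by simp
  qed
  have limBs: "((\<lambda>w. F w Bs) \<longlongrightarrow> 1) at_top"
  proof -
    have "((\<lambda>w. F w Bs) \<longlongrightarrow> (\<Sum>j<n. \<beta> j * (if s j < Bs then 1 else 0))) at_top"
      unfolding F_def using sB unfolding Bs_def by (intro F_lim) fastforce
    moreover have "(\<Sum>j<n. \<beta> j * (if s j < Bs then 1 else 0)) = P n"
      unfolding P_def using sB unfolding Bs_def by (intro sum.cong) fastforce+
    ultimately show ?thesis using Pn by simp
  qed
  have sless: "s j < t i \<longleftrightarrow> j < i" for i j
  proof -
    have "s j < t i \<longleftrightarrow> (real j + 1/2) * h < real i * h" unfolding s_def t_def by simp
    also have "\<dots> \<longleftrightarrow> real j + 1/2 < real i" using h0 by simp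
    also have "\<dots> \<longleftrightarrow> j < i" by linarith
    finally show ?thesis .
  qed
  have sneq: "s j \<noteq> t i" for i j
  proof
    assume "s j = t i"
    hence "(real j + 1/2) * h = real i * h" unfolding s_def t_def by simp
    hence "real j + 1/2 = real i" using h0 by simp
    hence "real (2*j+1) = real (2*i)" by simp
    hence "2*j+1 = 2*i" by (simp only: of_nat_eq_iff)
    thus False by presburger
  qed
  have limt: "((\<lambda>w. F w (t i)) \<longlongrightarrow> P i) at_top" if "i \<le> n" for i
  proof -
    have "((\<lambda>w. F w (t i)) \<longlongrightarrow> (\<Sum>j<n. \<beta> j * (if s j < t i then 1 else 0))) at_top"
      unfolding F_def using sneq by (intro F_lim) auto
    moreover have "(\<Sum>j<n. \<beta> j * (if s j < t i then 1 else 0)) = P i"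
    proof -
      have "(\<Sum>j<n. \<beta> j * (if s j < t i then 1 else 0)) = (\<Sum>j<n. if j < i then \<beta> j else 0)"
        by (intro sum.cong) (auto simp: sless)
      also have "\<dots> = (\<Sum>j\<in>{..<n} \<inter> {j. j < i}. \<beta> j)" by (simp add: sum.inter_restrict)
      also have "{..<n} \<inter> {j. j < i} = {..<i}" using that by auto
      finally show ?thesis unfolding P_def by simp
    qed
    ultimately show ?thesis by simp
  qed
  have limG: "((\<lambda>w. (F w (t i) - F w As) / (F w Bs - F w As)) \<longlongrightarrow> P i) at_top" if "i \<le> n" for i
    using tendsto_divide[OF tendsto_diff[OF limt[OF that] limAs] tendsto_diff[OF limBs limAs]] by simp
  have "eventually (\<lambda>w. \<forall>i\<in>{..n}. dist ((F w (t i) - F w As) / (F w Bs - F w As)) (P i) < \<epsilon>/8) at_top"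
  proof (intro eventually_ball_finite ballI)
    fix i assume "i \<in> {..n}"
    hence "i \<le> n" by simp
    have e8: "\<epsilon>/8 > 0" using e by simp
    show "eventually (\<lambda>w. dist ((F w (t i) - F w As) / (F w Bs - F w As)) (P i) < \<epsilon>/8) at_top"
      using tendsto_iff[THEN iffD1, rule_format, OF limG[OF \<open>i \<le> n\<close>] e8] .
  qed simp
  moreover have "eventually (\<lambda>w. w > (0::real)) at_top" by (rule eventually_gt_at_top)
  ultimately have "eventually (\<lambda>w. w > 0 \<and> (\<forall>i\<in>{..n}. dist ((F w (t i) - F w As) / (F w Bs - F w As)) (P i) < \<epsilon>/8)) at_top"
    by eventually_elim auto
  then obtain w1 where w1: "\<forall>x\<ge>w1. x > 0 \<and> (\<forall>i\<in>{..n}. dist ((F x (t i) - F x As) / (F x Bs - F x As)) (P i) < \<epsilon>/8)"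
    unfolding eventually_at_top_linorder by blast
  define w where "w = w1"
  have w0: "w > 0" using w1 unfolding w_def by simp
  have wclose: "\<bar>(F w (t i) - F w As) / (F w Bs - F w As) - P i\<bar> < \<epsilon>/8" if "i \<le> n" for i
    using w1 that unfolding w_def dist_real_def by simp
  define d :: "nat \<Rightarrow> nat" where "d = (\<lambda>l. if l = 0 then 1 else n)"
  define W :: "nat \<Rightarrow> nat \<Rightarrow> nat \<Rightarrow> real" where "W = (\<lambda>l i j. w)"
  define c :: "nat \<Rightarrow> nat \<Rightarrow> real" where "c = (\<lambda>l j. - w * s j)"
  have outF: "pnn_out 2 d W c \<beta> z = F w z" for z unfolding d_def W_def c_def F_def by (rule pnn2)
  define G where "G x = (F w x - F w As) / (F w Bs - F w As)" for x
  have normG: "pnn_norm 2 d W c \<beta> As Bs x = G x" for x unfolding pnn_norm_def G_def outF ..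
  have Fmono: "F w x \<le> F w y" if "x \<le> y" for x y
    unfolding F_def using w0 that \<beta>pos
    by (intro sum_mono mult_left_mono sig_mono) (simp_all add: less_imp_le)
  have Fden: "F w Bs - F w As > 0"
  proof -
    have "F w As < F w Bs" unfolding F_def
    proof (rule sum_strict_mono)
      have "0 \<in> {..<n}" using n1 by simp
      thus "{..<n} \<noteq> {}" by blast
      fix j assume "j \<in> {..<n}"
      have "w * (As - s j) < w * (Bs - s j)" using w0 assms(1) unfolding As_def Bs_def by simp
      hence "sigmoid (w * (As - s j)) < sigmoid (w * (Bs - s j))" by (rule sig_strict)
      thus "\<beta> j * sigmoid (w * (As - s j)) < \<beta> j * sigmoid (w * (Bs - s j))"
        using \<beta>pos[of j] by (rule mult_strict_left_mono)
    qed auto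
    thus ?thesis by simp
  qed
  have Gmono: "G x \<le> G y" if "x \<le> y" for x y
    unfolding G_def using Fmono[OF that] Fden by (intro divide_right_mono) auto
  have Gclose: "\<bar>G (t i) - N (t i)\<bar> < \<epsilon>/4" if "i \<le> n" for i
    using wclose[OF that] PN[OF that] d0 unfolding G_def by linarith
  have pt: "\<bar>G x - N x\<bar> \<le> \<epsilon>/2" if x: "x \<in> {A..B}" for x
  proof -
    obtain i where i: "i < n" "t i \<le> x" "x \<le> t (Suc i)"
      using grid_find[OF assms(1) n1, of x] x unfolding t_def h_def by auto
    have ti: "t i \<in> {A..B}" "t (Suc i) \<in> {A..B}" using tin i by auto
    have "t (Suc i) - t i = h" unfolding t_def by (simp add: algebra_simps)
    hence dist1: "dist x (t i) < dd" "dist (t (Suc i)) x < dd" using i hdd by (auto simp: dist_real_def)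
    have "\<bar>N x - N (t i)\<bar> < \<epsilon>/4" using ucN[OF ti(1) x dist1(1)] by (simp add: dist_real_def)
    moreover have "\<bar>N (t (Suc i)) - N x\<bar> < \<epsilon>/4" using ucN[OF x ti(2) dist1(2)] by (simp add: dist_real_def)
    moreover have "G (t i) \<le> G x" "G x \<le> G (t (Suc i))" using Gmono i by auto
    moreover have "\<bar>G (t i) - N (t i)\<bar> < \<epsilon>/4" "\<bar>G (t (Suc i)) - N (t (Suc i))\<bar> < \<epsilon>/4"
      using Gclose i by auto
    ultimately show ?thesis by linarith
  qed
  have "(SUP x\<in>{A..B}. \<bar>pnn_norm 2 d W c \<beta> As Bs x - N x\<bar>) \<le> \<epsilon>/2"
    using assms(1) pt by (intro cSUP_least) (auto simp: normG)
  hence "(SUP x\<in>{A..B}. \<bar>pnn_norm 2 d W c \<beta> As Bs x - N x\<bar>) < \<epsilon>" using e by linarith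
  moreover have "As < Bs" using assms(1) unfolding As_def Bs_def by simp
  moreover have "valid_pnn 2 d W \<beta>"
  proof -
    have "(\<Sum>j<n. \<beta> j) = 1" using Pn unfolding P_def .
    thus ?thesis unfolding valid_pnn_def d_def W_def using n1 w0 \<beta>pos by auto
  qed
  ultimately show "\<exists>As Bs L d W c \<beta>. As < Bs \<and> valid_pnn L d W \<beta> \<and>
           (SUP x\<in>{A..B}. \<bar>pnn_norm L d W c \<beta> As Bs x - N x\<bar>) < \<epsilon>" by blast
qed

end
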